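(* Consider the series $H_{a_1,\dots,a_r}(z)$ for all $r\ge1$ and all tuples $(a_1,\dots,a_r)$ of positive integers none of which is divisible by $3$. These series (for pairwise distinct tuples), together with the constant series $1$, are linearly independent over $(\mathbb Z/3\mathbb Z)[z]$; consequently they are also linearly independent over $(\mathbb Z/3^\gamma\mathbb Z)[z]$ for every positive integer $\gamma$, and over $\mathbb Z[z]$. That is, if $p_0(z)+\sum_{i=1}^N p_i(z)H_{a^{(i)}}(z)=0$ (over the respective coefficient ring) with pairwise distinct such tuples $a^{(i)}$, then all polynomials $p_i$ are zero.
   Context: For positive integers $a_1,\dots,a_r$, $H_{a_1,\dots,a_r}(z)=\sum_{n_1>n_2>\dots>n_r\ge0}z^{a_13^{n_1}+a_23^{n_2}+\dots+a_r3^{n_r}}$. *)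

theory Defs
  imports "HOL-Computational_Algebra.Polynomial_FPS"
begin

text \<open>Index tuples (n_1,...,n_r) with n_1 > n_2 > ... > n_r \<ge> 0 contributing
  z^(a_1 3^n_1 + ... + a_r 3^n_r) to H_a(z); the coefficient of z^m is the number
  of such tuples with exponent m.\<close>

definition H_coeff :: "nat list \<Rightarrow> nat \<Rightarrow> nat" where
  "H_coeff a m = card {ns :: nat list. length ns = length a \<and> sorted_wrt (>) ns \<and>
      (\<Sum>i<length a. a ! i * 3 ^ (ns ! i)) = m}"

definition H :: "nat list \<Rightarrow> int fps" where
  "H a = Abs_fps (\<lambda>m. int (H_coeff a m))"

definition admissible :: "nat list \<Rightarrow> bool" where
  "admissible a \<longleftrightarrow> a \<noteq> [] \<and> (\<forall>x\<in>set a. 0 < x \<and> \<not> 3 dvd x)"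

end

theory Submission
  imports Defs "HOL-Library.Numeral_Type"
begin
unbundle fps_syntax



definition dil :: "'a::comm_ring_1 fps \<Rightarrow> 'a fps" where
  "dil f = Abs_fps (\<lambda>m. if 3 dvd m then f $ (m div 3) else 0)"
definition sec :: "nat \<Rightarrow> 'a::comm_ring_1 fps \<Rightarrow> 'a fps" where
  "sec j f = Abs_fps (\<lambda>m. f $ (3*m+j))"

lemma sec_nth[simp]: "sec j f $ m = f $ (3*m+j)" by (simp add: sec_def)
lemma dil_nth: "dil f $ m = (if 3 dvd m then f $ (m div 3) else 0)" by (simp add: dil_def)

lemma sec_add: "sec j (f + g) = sec j f + sec j g" by (simp add: fps_eq_iff)
lemma sec_sum: "sec j (\<Sum>x\<in>S. f x) = (\<Sum>x\<in>S. sec j (f x))"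
  by (simp add: fps_eq_iff fps_sum_nth)
lemma sec_0[simp]: "sec j 0 = 0" by (simp add: fps_eq_iff)

lemma sec_dil_mult:
  assumes "j < 3"
  shows "sec j (dil g * h) = g * sec j h"
proof (rule fps_ext)
  fix m
  have "sec j (dil g * h) $ m = (\<Sum>i=0..3*m+j. dil g $ i * h $ (3*m+j-i))"
    by (simp add: fps_mult_nth)
  also have "\<dots> = (\<Sum>i\<in>(\<lambda>i. 3*i) ` {0..m}. dil g $ i * h $ (3*m+j-i))"
  proof (rule sum.mono_neutral_right)
    show "(\<lambda>i. 3*i) ` {0..m} \<subseteq> {0..3*m+j}" by auto
    show "\<forall>i\<in>{0..3*m+j} - (\<lambda>i. 3*i) ` {0..m}. dil g $ i * h $ (3*m+j-i) = 0"
    proof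
      fix i assume i: "i \<in> {0..3*m+j} - (\<lambda>i. 3*i) ` {0..m}"
      show "dil g $ i * h $ (3*m+j-i) = 0"
      proof (cases "3 dvd i")
        case True
        then obtain k where k: "i = 3*k" by blast
        with i assms have "k \<le> m" by auto
        with k i show ?thesis by auto
      qed (simp add: dil_nth)
    qed
  qed auto
  also have "\<dots> = (\<Sum>i=0..m. dil g $ (3*i) * h $ (3*m+j-3*i))"
    by (subst sum.reindex) (auto simp: inj_on_def)
  also have "\<dots> = (\<Sum>i=0..m. g $ i * sec j h $ (m-i))"
    by (rule sum.cong) (auto simp: dil_nth diff_mult_distrib2)
  also have "\<dots> = (g * sec j h) $ m" by (simp add: fps_mult_nth)
  finally show "sec j (dil g * h) $ m = (g * sec j h) $ m" .
qed

lemma sec_zero_all: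
  assumes "\<And>j. j < 3 \<Longrightarrow> sec j f = 0" shows "f = 0"
proof (rule fps_ext)
  fix m
  have "f $ m = sec (m mod 3) f $ (m div 3)" by simp
  also have "\<dots> = 0" using assms[of "m mod 3"] by simp
  finally show "f $ m = 0 $ m" by simp
qed




definition wsum :: "nat list \<Rightarrow> nat list \<Rightarrow> nat" where
  "wsum t ns = (\<Sum>i<length t. t!i * 3^(ns!i))"
definition Hs :: "nat list \<Rightarrow> nat \<Rightarrow> nat list set" where
  "Hs t m = {ns. length ns = length t \<and> sorted_wrt (>) ns \<and> wsum t ns = m}"

lemma H_coeff_Hs: "H_coeff t m = card (Hs t m)"
  by (simp add: H_coeff_def Hs_def wsum_def)

lemma wsum_snoc:
  assumes "length ns = length u"
  shows "wsum (u@[x]) (ns@[n]) = wsum u ns + x*3^n"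
proof -
  have "wsum (u@[x]) (ns@[n]) = (\<Sum>i<length u. (u@[x])!i * 3^((ns@[n])!i)) + x*3^n"
    using assms by (simp add: wsum_def nth_append)
  also have "(\<Sum>i<length u. (u@[x])!i * 3^((ns@[n])!i)) = wsum u ns"
    unfolding wsum_def using assms by (intro sum.cong) (auto simp: nth_append)
  finally show ?thesis .
qed

lemma wsum_Suc:
  assumes "length ns = length u"
  shows "wsum u (map Suc ns) = 3 * wsum u ns"
  unfolding wsum_def sum_distrib_left using assms
  by (intro sum.cong) auto

lemma Hs_bound:
  assumes pos: "\<forall>y\<in>set t. 0 < y" and ns: "ns \<in> Hs t m" and y: "y \<in> set ns"
  shows "y \<le> m"
proof -
  from ns have len: "length ns = length t" and ws: "wsum t ns = m" by (auto simp: Hs_def)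
  from y obtain i where i: "i < length ns" "ns!i = y" by (auto simp: in_set_conv_nth)
  have ti: "t!i > 0" using pos i len by auto
  have "y < 2^y" by (rule less_exp)
  also have "(2::nat)^y \<le> 3^y" by (rule power_mono) auto
  also have "(3::nat)^y \<le> t!i * 3^y" using ti by simp
  also have "t!i * 3^(ns!i) \<le> wsum t ns"
    unfolding wsum_def using i len by (intro member_le_sum) auto
  hence "t!i * 3^y \<le> wsum t ns" using i by simp
  finally show ?thesis using ws by simp
qed

lemma Hs_finite:
  assumes pos: "\<forall>y\<in>set t. 0 < y"
  shows "finite (Hs t m)"
proof (rule finite_subset)
  show "Hs t m \<subseteq> {xs. set xs \<subseteq> {..m} \<and> length xs = length t}"
    using Hs_bound[OF pos] by (auto simp: Hs_def)
  show "finite {xs. set xs \<subseteq> {..m} \<and> length xs = length t}"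
    by (rule finite_lists_length_eq) simp
qed

lemma sorted_snoc_gt: "sorted_wrt (>) (ns@[n]) \<longleftrightarrow> sorted_wrt (>) ns \<and> (\<forall>y\<in>set ns. n < y)"
  by (auto simp: sorted_wrt_append)

lemma map_pred_Suc: "\<forall>y\<in>set ns. 0 < y \<Longrightarrow> ns = map Suc (map (\<lambda>y. y - 1) ns)"
  by (induction ns) auto

lemma Hs_snoc:
  assumes pos: "\<forall>y\<in>set (u@[x]). 0 < y"
  shows "card (Hs (u@[x]) m) =
    (if 3 dvd m then card (Hs (u@[x]) (m div 3)) else 0) +
    (if x \<le> m \<and> 3 dvd (m-x) then card (Hs u ((m-x) div 3)) else 0)"
proof -
  define t where "t = u@[x]"
  define B0 where "B0 = (if 3 dvd m then Hs t (m div 3) else {})"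
  define C0 where "C0 = (if x \<le> m \<and> 3 dvd (m-x) then Hs u ((m-x) div 3) else {})"
  define B where "B = map Suc ` B0"
  define C where "C = (\<lambda>ns. map Suc ns @ [0]) ` C0"
  have posu: "\<forall>y\<in>set u. 0 < y" using pos by auto
  have fB0: "finite B0" unfolding B0_def t_def using Hs_finite[OF pos] by auto
  have fC0: "finite C0" unfolding C0_def using Hs_finite[OF posu] by auto
  have cB: "card B = card B0" unfolding B_def
    by (rule card_image) (auto simp: inj_on_def)
  have cC: "card C = card C0" unfolding C_def
    by (rule card_image) (auto simp: inj_on_def)
  have disj: "B \<inter> C = {}" unfolding B_def C_def
    by (force dest: arg_cong[where f="\<lambda>l. 0 \<in> set l"])
  have eq: "Hs t m = B \<union> C"
  proof
    show "Hs t m \<subseteq> B \<union> C"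
    proof
      fix ns assume ns: "ns \<in> Hs t m"
      hence len: "length ns = Suc (length u)" and so: "sorted_wrt (>) ns" and ws: "wsum t ns = m"
        by (auto simp: Hs_def t_def)
      obtain ns0 n where nsd: "ns = ns0 @ [n]"
        using len by (metis append_butlast_last_id length_0_conv nat.distinct(1))
      have len0: "length ns0 = length u" using len nsd by simp
      have so0: "sorted_wrt (>) ns0" and gt: "\<forall>y\<in>set ns0. n < y"
        using so nsd sorted_snoc_gt by auto
      show "ns \<in> B \<union> C"
      proof (cases "n = 0")
        case False
        have p: "\<forall>y\<in>set ns. 0 < y" using gt False nsd by auto
        define ms where "ms = map (\<lambda>y. y - 1) ns"
        have nsms: "ns = map Suc ms" unfolding ms_def by (rule map_pred_Suc[OF p])
        have lms: "length ms = length t" using len by (simp add: ms_def t_def)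
        have "m = 3 * wsum t ms" using ws nsms wsum_Suc[OF lms] by simp
        moreover have "sorted_wrt (>) ms" using so nsms by (simp add: sorted_wrt_map)
        ultimately have "ms \<in> B0" using lms by (auto simp: B0_def Hs_def)
        thus ?thesis using nsms B_def by auto
      next
        case True
        have p: "\<forall>y\<in>set ns0. 0 < y" using gt True by auto
        define ms where "ms = map (\<lambda>y. y - 1) ns0"
        have nsms: "ns0 = map Suc ms" unfolding ms_def by (rule map_pred_Suc[OF p])
        have lms: "length ms = length u" using len0 by (simp add: ms_def)
        have "m = 3 * wsum u ms + x"
          using ws nsms wsum_Suc[OF lms] wsum_snoc[of ns0 u x n] len0 True nsd
          by (simp add: t_def)
        moreover have "sorted_wrt (>) ms" using so0 nsms by (simp add: sorted_wrt_map)
        ultimately have "ms \<in> C0" using lms by (auto simp: C0_def Hs_def)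
        thus ?thesis using nsms nsd True C_def by auto
      qed
    qed
    show "B \<union> C \<subseteq> Hs t m"
    proof
      fix ns assume "ns \<in> B \<union> C"
      thus "ns \<in> Hs t m"
      proof
        assume "ns \<in> B"
        then obtain ms where ms: "ms \<in> B0" "ns = map Suc ms" by (auto simp: B_def)
        hence d: "3 dvd m" and ms2: "ms \<in> Hs t (m div 3)" by (auto simp: B0_def split: if_splits)
        hence lms: "length ms = length t" by (simp add: Hs_def)
        show ?thesis using ms2 ms(2) wsum_Suc[OF lms] d
          by (auto simp: Hs_def sorted_wrt_map)
      next
        assume "ns \<in> C"
        then obtain ms where ms: "ms \<in> C0" "ns = map Suc ms @ [0]" by (auto simp: C_def)
        hence d: "x \<le> m" "3 dvd (m-x)" and ms2: "ms \<in> Hs u ((m-x) div 3)"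
          by (auto simp: C0_def split: if_splits)
        hence lms: "length ms = length u" by (simp add: Hs_def)
        have "wsum t ns = m"
          using wsum_snoc[of "map Suc ms" u x 0] lms wsum_Suc[OF lms] ms2 d ms(2)
          by (auto simp: t_def Hs_def)
        moreover have "sorted_wrt (>) ns" using ms2 ms(2)
          by (auto simp: Hs_def sorted_snoc_gt sorted_wrt_map)
        ultimately show ?thesis using lms ms(2) by (simp add: Hs_def t_def)
      qed
    qed
  qed
  have "card (Hs t m) = card B + card C"
    unfolding eq using fB0 fC0 disj B_def C_def by (intro card_Un_disjoint) auto
  thus ?thesis using cB cC by (simp add: B0_def C0_def t_def)
qed

lemma Hs_Nil: "card (Hs [] m) = (if m = 0 then 1 else 0)"
proof -
  have "Hs [] m = (if m = 0 then {[]} else {})" by (auto simp: Hs_def wsum_def)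
  thus ?thesis by simp
qed

definition G :: "nat list \<Rightarrow> 'a::comm_ring_1 fps" where
  "G t = Abs_fps (\<lambda>m. of_nat (H_coeff t m))"

lemma G_Nil: "G [] = 1"
  by (simp add: fps_eq_iff G_def H_coeff_Hs Hs_Nil)

lemma G_snoc_nth:
  assumes pos: "\<forall>y\<in>set (u@[x]). 0 < y"
  shows "(G (u@[x]) :: 'a::comm_ring_1 fps) $ m =
      (if 3 dvd m then G (u@[x]) $ (m div 3) else 0) +
      (if x \<le> m \<and> 3 dvd (m-x) then G u $ ((m-x) div 3) else 0)"
  unfolding G_def H_coeff_Hs fps_nth_Abs_fps
  by (subst Hs_snoc[OF pos]) simp

lemma G_snoc:
  assumes pos: "\<forall>y\<in>set (u@[x]). 0 < y"
  shows "G (u@[x]) = dil (G (u@[x])) + fps_X^x * dil (G u)"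
proof (rule fps_ext)
  fix m
  show "G (u@[x]) $ m = (dil (G (u@[x])) + fps_X^x * dil (G u)) $ m"
    unfolding G_snoc_nth[OF pos, of m] by (auto simp: fps_X_power_mult_nth dil_nth)
qed




definition bnd :: "'a::comm_ring_1 fps \<Rightarrow> bool" where
  "bnd f \<longleftrightarrow> (\<exists>K. \<forall>m>K. f $ m = 0)"

lemma bnd_sec: "bnd f \<Longrightarrow> bnd (sec j f)"
  unfolding bnd_def by (metis le_add1 le_less_trans mult_le_mono1 mult_1 numeral_le_iff one_le_numeral sec_nth trans_less_add1 less_le_trans not_less)

lemma bnd_mult_X: "bnd f \<Longrightarrow> bnd (f * fps_X^x)"
  unfolding bnd_def fps_X_power_mult_right_nth
  by (metis add.commute less_diff_conv2 not_less order.strict_trans2 less_imp_le_nat)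

lemma bnd_add: "bnd f \<Longrightarrow> bnd g \<Longrightarrow> bnd (f + g)"
  unfolding bnd_def by (metis fps_add_nth max.strict_boundedE add_0)

lemma bnd_0: "bnd 0" unfolding bnd_def by auto

lemma bnd_sum: "finite S \<Longrightarrow> (\<And>x. x \<in> S \<Longrightarrow> bnd (f x)) \<Longrightarrow> bnd (\<Sum>x\<in>S. f x)"
  by (induction S rule: finite_induct) (auto intro: bnd_add bnd_0)

lemma sec_const: "sec j (fps_const c) = (if j = 0 then fps_const c else 0)"
  by (auto simp: fps_eq_iff)

lemma const_of_bnd0: "(\<forall>m>0. f $ m = 0) \<Longrightarrow> f = fps_const (f $ 0)"
  by (auto simp: fps_eq_iff)

locale hsetup =
  fixes A :: "nat set" and L0 :: nat
  assumes finA: "finite A" and goodA: "\<forall>x\<in>A. 0 < x \<and> \<not> 3 dvd x"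
begin

definition U where "U = {t. set t \<subseteq> A \<and> length t \<le> L0}"

lemma finU: "finite U"
  unfolding U_def using finite_lists_length_le[OF finA] by simp

definition S :: "(nat list \<Rightarrow> 'a::comm_ring_1 fps) \<Rightarrow> 'a fps" where
  "S q = (\<Sum>t\<in>U. q t * G t)"

definition lam :: "nat \<Rightarrow> (nat list \<Rightarrow> 'a::comm_ring_1 fps) \<Rightarrow> nat list \<Rightarrow> 'a fps" where
  "lam j q u = sec j (q u) + (if length u < L0 then \<Sum>x\<in>A. sec j (q (u@[x]) * fps_X^x) else 0)"

lemma term_sec:
  assumes j: "j < 3" and t: "t \<in> U"
  shows "sec j (q t * G t) = sec j (q t) * G t +
     (if t = [] then 0 else sec j (q t * fps_X^(last t)) * G (butlast t))"
proof (cases "t = []")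
  case True
  thus ?thesis by (simp add: G_Nil)
next
  case False
  define u x where "u = butlast t" and "x = last t"
  have t': "t = u@[x]" using False by (simp add: u_def x_def)
  have pos: "\<forall>y\<in>set (u@[x]). 0 < y" using t goodA t' by (auto simp: U_def)
  have e: "G t = dil (G t) + fps_X^x * dil (G u)" unfolding t' by (rule G_snoc[OF pos])
  have "q t * G t = q t * (dil (G t) + fps_X^x * dil (G u))"
    by (rule arg_cong[where f="\<lambda>g. q t * g", OF e])
  also have "\<dots> = dil (G t) * q t + dil (G u) * (q t * fps_X^x)"
    by (simp add: distrib_left ac_simps)
  finally have "q t * G t = dil (G t) * q t + dil (G u) * (q t * fps_X^x)" .
  hence "sec j (q t * G t) = G t * sec j (q t) + G u * sec j (q t * fps_X^x)"
    by (simp add: sec_add sec_dil_mult[OF j])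
  thus ?thesis using False by (simp add: u_def x_def mult.commute)
qed

lemma sec_S:
  assumes j: "j < 3"
  shows "sec j (S q) = S (lam j q)"
proof -
  define V where "V = {u\<in>U. length u < L0}"
  have finV: "finite V" using finU by (simp add: V_def)
  have nilU: "[] \<in> U" by (simp add: U_def)
  have "sec j (S q) = (\<Sum>t\<in>U. sec j (q t * G t))" by (simp add: S_def sec_sum)
  also have "\<dots> = (\<Sum>t\<in>U. sec j (q t) * G t) +
     (\<Sum>t\<in>U. if t = [] then 0 else sec j (q t * fps_X^(last t)) * G (butlast t))"
    by (simp add: term_sec[OF j] sum.distrib)
  also have "(\<Sum>t\<in>U. if t = [] then 0 else sec j (q t * fps_X^(last t)) * G (butlast t))
     = (\<Sum>t\<in>U-{[]}. sec j (q t * fps_X^(last t)) * G (butlast t))"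
    using finU by (simp add: sum.If_cases Diff_eq)
  also have "\<dots> = (\<Sum>(u,x)\<in>Sigma V (\<lambda>_. A). sec j (q (u@[x]) * fps_X^x) * G u)"
  proof -
    have "bij_betw (\<lambda>(u,x). u@[x]) (Sigma V (\<lambda>_. A)) (U-{[]})"
    proof (rule bij_betwI')
      show "\<And>a b. a \<in> Sigma V (\<lambda>_. A) \<Longrightarrow> b \<in> Sigma V (\<lambda>_. A) \<Longrightarrow>
          ((case a of (u, x) \<Rightarrow> u @ [x]) = (case b of (u, x) \<Rightarrow> u @ [x])) = (a = b)"
        by auto
      show "\<And>a. a \<in> Sigma V (\<lambda>_. A) \<Longrightarrow> (case a of (u, x) \<Rightarrow> u @ [x]) \<in> U - {[]}"
        by (auto simp: V_def U_def)
      show "\<And>t. t \<in> U - {[]} \<Longrightarrow> \<exists>a\<in>Sigma V (\<lambda>_. A). t = (case a of (u, x) \<Rightarrow> u @ [x])"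
      proof -
        fix t assume t: "t \<in> U - {[]}"
        hence "t = butlast t @ [last t]" by simp
        moreover have "length (butlast t) < L0" using t by (cases t) (auto simp: U_def)
        moreover have "butlast t \<in> V" "last t \<in> A" using t \<open>length (butlast t) < L0\<close>
          by (auto simp: V_def U_def dest: in_set_butlastD simp del: length_butlast)
        ultimately show "\<exists>a\<in>Sigma V (\<lambda>_. A). t = (case a of (u, x) \<Rightarrow> u @ [x])"
          by (intro bexI[of _ "(butlast t, last t)"]) auto
      qed
    qed
    from sum.reindex_bij_betw[OF this, of "\<lambda>t. sec j (q t * fps_X^(last t)) * G (butlast t)"]
    show ?thesis by (simp add: case_prod_unfold)
  qed
  also have "\<dots> = (\<Sum>u\<in>V. (\<Sum>x\<in>A. sec j (q (u@[x]) * fps_X^x)) * G u)"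
    by (simp add: sum.Sigma[OF finV, of "\<lambda>_. A", symmetric] finA sum_distrib_right)
  also have "\<dots> = (\<Sum>u\<in>U. (if length u < L0 then \<Sum>x\<in>A. sec j (q (u@[x]) * fps_X^x) else 0) * G u)"
    unfolding V_def using finU by (simp add: sum.inter_filter if_distrib[of "\<lambda>z. z * _"] cong: if_cong)
  finally show ?thesis
    by (simp add: S_def lam_def distrib_right sum.distrib)
qed

end




context hsetup begin

definition rel :: "(nat list \<Rightarrow> 'a::comm_ring_1 fps) \<Rightarrow> bool" where
  "rel q \<longleftrightarrow> S q = 0 \<and> (\<forall>t\<in>U. bnd (q t))"

definition ml :: "nat \<Rightarrow> (nat list \<Rightarrow> 'a::comm_ring_1 fps) \<Rightarrow> bool" where
  "ml L q \<longleftrightarrow> (\<forall>t\<in>U. length t > L \<longrightarrow> q t = 0)"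

lemma child_U: "u \<in> U \<Longrightarrow> length u < L0 \<Longrightarrow> x \<in> A \<Longrightarrow> u@[x] \<in> U"
  by (auto simp: U_def)

lemma rel_lam: assumes "rel q" "j < 3" shows "rel (lam j q)"
proof -
  have "S (lam j q) = 0" using assms sec_S[of j q] by (simp add: rel_def)
  moreover have "bnd (lam j q u)" if u: "u \<in> U" for u
    unfolding lam_def using assms u child_U finA
    by (auto simp: rel_def intro!: bnd_add bnd_sec bnd_sum bnd_mult_X bnd_0)
  ultimately show ?thesis by (simp add: rel_def)
qed

lemma lam_top: assumes "ml L q" "u \<in> U" "length u \<ge> L" shows "lam j q u = sec j (q u)"
proof -
  have "q (u@[x]) = 0" if "length u < L0" "x \<in> A" for x
    using assms that child_U[of u x] by (auto simp: ml_def)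
  thus ?thesis by (simp add: lam_def)
qed

lemma ml_lam: assumes "ml L q" shows "ml L (lam j q)"
  unfolding ml_def
proof (intro ballI impI)
  fix t assume t: "t \<in> U" "L < length t"
  have "lam j q t = sec j (q t)" using lam_top[OF assms t(1)] t by simp
  thus "lam j q t = 0" using assms t by (simp add: ml_def)
qed

lemma S_nil_only:
  assumes "\<forall>v\<in>U. v \<noteq> [] \<longrightarrow> q v = 0"
  shows "S q = q []"
proof -
  have "S q = (\<Sum>v\<in>U. if v = [] then q [] else 0)"
    unfolding S_def using assms by (intro sum.cong) (auto simp: G_Nil)
  also have "\<dots> = q []" using finU by (simp add: U_def)
  finally show ?thesis .
qed

lemma step:
  assumes IH: "0 < L \<Longrightarrow> \<forall>q::nat list \<Rightarrow> 'a::comm_ring_1 fps. rel q \<and> ml (L-1) q \<longrightarrow> (\<forall>t\<in>U. q t = 0)"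
  shows "\<forall>q::nat list \<Rightarrow> 'a fps. rel q \<and> ml L q \<longrightarrow> (\<forall>t\<in>U. q t = 0)"
proof (intro allI impI)
  fix q :: "nat list \<Rightarrow> 'a fps" assume hq: "rel q \<and> ml L q"
  have suff: "\<forall>t\<in>U. q t = 0"
    if r: "rel q" and m: "ml L q" and tz: "\<forall>t\<in>U. length t = L \<longrightarrow> q t = 0"
    for q :: "nat list \<Rightarrow> 'a fps"
  proof (cases "L = 0")
    case True thus ?thesis using m tz by (auto simp: ml_def)
  next
    case False
    have "ml (L-1) q" unfolding ml_def
    proof (intro ballI impI)
      fix t assume t: "t \<in> U" "L - 1 < length t"
      hence "length t = L \<or> L < length t" using False by linarith
      thus "q t = 0" using m tz t by (auto simp: ml_def)
    qed
    thus ?thesis using IH False r by auto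
  qed
  have tops: "\<forall>q::nat list \<Rightarrow> 'a fps. rel q \<and> ml L q \<and> (\<forall>t\<in>U. length t = L \<longrightarrow> (\<forall>m>D. q t $ m = 0))
      \<longrightarrow> (\<forall>t\<in>U. length t = L \<longrightarrow> q t = 0)" for D
  proof (induction D rule: less_induct)
    case (less D)
    show ?case
    proof (intro allI impI)
      fix q :: "nat list \<Rightarrow> 'a fps"
      assume h: "rel q \<and> ml L q \<and> (\<forall>t\<in>U. length t = L \<longrightarrow> (\<forall>m>D. q t $ m = 0))"
      show "\<forall>t\<in>U. length t = L \<longrightarrow> q t = 0"
      proof (cases "D = 0")
        case False
        have lz: "\<forall>t\<in>U. length t = L \<longrightarrow> lam j q t = 0" if j: "j < 3" for j
        proof -
          have "rel (lam j q)" using rel_lam h j by auto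
          moreover have "ml L (lam j q)" using ml_lam h by auto
          moreover have "\<forall>t\<in>U. length t = L \<longrightarrow> (\<forall>m > D div 3. lam j q t $ m = 0)"
          proof (intro ballI impI allI)
            fix t m assume t: "t \<in> U" "length t = L" and m: "D div 3 < m"
            have "lam j q t = sec j (q t)" using lam_top h t by auto
            moreover have "3*m+j > D" using m by linarith
            ultimately show "lam j q t $ m = 0" using h t by auto
          qed
          moreover have "D div 3 < D" using False by simp
          ultimately show ?thesis using less.IH by blast
        qed
        show ?thesis
        proof (intro ballI impI)
          fix t assume t: "t \<in> U" "length t = L"
          show "q t = 0"
          proof (rule sec_zero_all)
            fix j :: nat assume j: "j < 3"
            have "lam j q t = sec j (q t)" using lam_top h t by auto
            thus "sec j (q t) = 0" using lz[OF j] t by auto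
          qed
        qed
      next
        case True
        have constq: "q v = fps_const (q v $ 0)" if "v \<in> U" "length v = L" for v
          using h that True by (intro const_of_bnd0) auto
        show ?thesis
        proof (intro ballI impI)
          fix t assume t: "t \<in> U" "length t = L"
          show "q t = 0"
          proof (rule ccontr)
            assume qt: "q t \<noteq> 0"
            define c where "c = q t $ 0"
            have cnz: "c \<noteq> 0" using qt constq[OF t] by (auto simp: c_def)
            show False
            proof (cases "L = 0")
              case True
              have "\<forall>v\<in>U. v \<noteq> [] \<longrightarrow> q v = 0" using h True by (auto simp: ml_def)
              hence "S q = q []" by (rule S_nil_only)
              moreover have "S q = 0" using h by (simp add: rel_def)
              moreover have "t = []" using t True by simp
              ultimately show False using qt by simp
            next
              case Lpos: False
              define u where "u = butlast t"
              define x0 where "x0 = last t"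
              have tne: "t \<noteq> []" using t Lpos by auto
              have tu: "t = u @ [x0]" using tne by (simp add: u_def x0_def)
              have uU: "u \<in> U" and x0A: "x0 \<in> A"
                and ulenL: "length u = L - 1"
                using t tne by (auto simp: U_def u_def x0_def dest: in_set_butlastD)
              have ulen: "length u < L0"
              proof -
                have "0 < length t" using tne by simp
                moreover have "length t \<le> L0" using t by (simp add: U_def)
                ultimately show ?thesis using ulenL t(2) by linarith
              qed
              have x0g: "0 < x0" "\<not> 3 dvd x0" using goodA x0A by auto
              have third: "\<forall>q'::nat list \<Rightarrow> 'a fps. rel q' \<and> ml L q' \<and>
                  (\<forall>v\<in>U. length v = L \<longrightarrow> q' v = q v) \<and> (\<forall>m>K. q' u $ m = 0) \<longrightarrow> False" for K
              proof (induction K rule: less_induct)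
                case (less K)
                show ?case
                proof (intro allI impI)
                  fix q' :: "nat list \<Rightarrow> 'a fps"
                  assume h': "rel q' \<and> ml L q' \<and> (\<forall>v\<in>U. length v = L \<longrightarrow> q' v = q v) \<and> (\<forall>m>K. q' u $ m = 0)"
                  have chq: "q' (u@[x]) = fps_const (q (u@[x]) $ 0)" if "x \<in> A" for x
                  proof -
                    have "u@[x] \<in> U" using child_U[OF uU ulen that] .
                    moreover have "length (u@[x]) = L" using ulenL Lpos by simp
                    ultimately show ?thesis using h' constq by auto
                  qed
                  define j0 where "j0 = x0 mod 3"
                  have j0: "j0 < 3" "j0 \<noteq> 0" using x0g by (auto simp: j0_def dvd_eq_mod_eq_0)
                  have rl: "rel (lam j0 q')" using rel_lam h' j0 by auto
                  have mlr: "ml (L-1) (lam j0 q')"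
                    unfolding ml_def
                  proof (intro ballI impI)
                    fix v assume v: "v \<in> U" "L - 1 < length v"
                    have "L \<le> length v" using v Lpos by linarith
                    hence lt: "lam j0 q' v = sec j0 (q' v)" using lam_top[of L q' v j0] h' v by auto
                    show "lam j0 q' v = 0"
                    proof (cases "length v = L")
                      case True
                      hence "q' v = fps_const (q v $ 0)" using h' constq v by auto
                      thus ?thesis using lt j0 by (simp add: sec_const)
                    next
                      case False
                      hence "q' v = 0" using h' v unfolding ml_def by auto
                      thus ?thesis using lt by simp
                    qed
                  qed
                  have "lam j0 q' u = 0" using IH Lpos rl mlr uU by blast
                  hence "lam j0 q' u $ (x0 div 3) = 0" by simp
                  moreover have "lam j0 q' u $ (x0 div 3) = q' u $ x0 + (\<Sum>x\<in>A. (q' (u@[x]) * fps_X^x) $ x0)"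
                  proof -
                    have "3 * (x0 div 3) + j0 = x0" by (simp add: j0_def)
                    thus ?thesis using ulen by (simp add: lam_def fps_sum_nth)
                  qed
                  moreover have "(\<Sum>x\<in>A. (q' (u@[x]) * fps_X^x) $ x0) = (\<Sum>x\<in>A. if x = x0 then q (u@[x]) $ 0 else 0)"
                    by (intro sum.cong) (auto simp: chq fps_X_power_mult_right_nth)
                  moreover have "(\<Sum>x\<in>A. if x = x0 then q (u@[x]) $ 0 else 0) = c"
                    using finA x0A by (simp add: c_def tu)
                  ultimately have qux: "q' u $ x0 = - c" by (simp add: eq_neg_iff_add_eq_0)
                  hence "x0 \<le> K" using h' cnz by (metis neg_equal_0_iff_equal not_le)
                  hence Kpos: "K div 3 < K" using x0g by simp
                  have rl0: "rel (lam 0 q')" using rel_lam[of q' 0] h' by auto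
                  have ml0: "ml L (lam 0 q')" using ml_lam[of L q' 0] h' by auto
                  have tp0: "\<forall>v\<in>U. length v = L \<longrightarrow> lam 0 q' v = q v"
                  proof (intro ballI impI)
                    fix v assume v: "v \<in> U" "length v = L"
                    have "lam 0 q' v = sec 0 (q' v)" using lam_top[of L q' v 0] h' v by simp
                    also have "q' v = fps_const (q v $ 0)" using h' constq v by auto
                    also have "sec 0 (fps_const (q v $ 0)) = fps_const (q v $ 0)" by (simp add: sec_const)
                    also have "\<dots> = q v" using constq[OF v] by simp
                    finally show "lam 0 q' v = q v" .
                  qed
                  have bd0: "\<forall>m>K div 3. lam 0 q' u $ m = 0"
                  proof (intro allI impI)
                    fix m assume m: "K div 3 < m"
                    have s0: "(\<Sum>x\<in>A. (q' (u@[x]) * fps_X^x) $ (3*m)) = 0"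
                    proof (intro sum.neutral ballI)
                      fix x assume x: "x \<in> A"
                      have "3*m \<noteq> x" using goodA x by auto
                      thus "(q' (u@[x]) * fps_X^x) $ (3*m) = 0"
                        by (auto simp: chq[OF x] fps_X_power_mult_right_nth)
                    qed
                    have "3*m > K" using m by linarith
                    hence "q' u $ (3*m) = 0" using h' by auto
                    thus "lam 0 q' u $ m = 0" using ulen s0 by (simp add: lam_def fps_sum_nth)
                  qed
                  show False using less.IH[OF Kpos] rl0 ml0 tp0 bd0 by blast
                qed
              qed
              obtain K where "\<forall>m>K. q u $ m = 0" using h uU by (auto simp: rel_def bnd_def)
              thus False using third[of K] h by blast
            qed
          qed
        qed
      qed
    qed
  qed
  obtain Ks where Ks: "\<forall>t\<in>U. \<forall>m>Ks t. q t $ m = 0"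
    using hq unfolding rel_def bnd_def by metis
  define D where "D = (\<Sum>t\<in>U. Ks t)"
  have "\<forall>t\<in>U. length t = L \<longrightarrow> (\<forall>m>D. q t $ m = 0)"
  proof (intro ballI impI allI)
    fix t m assume t: "t \<in> U" and "length t = L" and m: "D < m"
    have "Ks t \<le> D" unfolding D_def using finU t by (intro member_le_sum) auto
    thus "q t $ m = 0" using Ks t m by auto
  qed
  hence "\<forall>t\<in>U. length t = L \<longrightarrow> q t = 0" using tops hq by blast
  thus "\<forall>t\<in>U. q t = 0" using suff hq by blast
qed

lemma main_indep:
  fixes q :: "nat list \<Rightarrow> 'a::comm_ring_1 fps"
  assumes "rel q" shows "\<forall>t\<in>U. q t = 0"
proof -
  have "\<forall>q::nat list \<Rightarrow> 'a fps. rel q \<and> ml L q \<longrightarrow> (\<forall>t\<in>U. q t = 0)" for L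
  proof (induction L)
    case 0 show ?case by (rule step) simp
  next
    case (Suc L) show ?case by (rule step) (use Suc in simp)
  qed
  moreover have "ml L0 q" by (auto simp: ml_def U_def)
  ultimately show ?thesis using assms by blast
qed

end



lemma of_int_3_eq0: "((of_int z :: 3) = 0) = (3 dvd z)"
proof -
  have "((of_int z :: 3) = 0) = (Rep_bit1 (of_int z :: 3) = Rep_bit1 (0::3))" by (simp add: Rep_bit1_inject)
  also have "\<dots> = (z mod 3 = 0)" using bit1.Rep_Abs_mod[where 'a=num1, of z] by (simp add: bit1.of_int_eq bit1.Rep_0)
  finally show ?thesis by (simp add: dvd_eq_mod_eq_0)
qed

lemma generic_indep:
  fixes Q :: "nat \<Rightarrow> 'a::comm_ring_1 fps" and a :: "nat \<Rightarrow> nat list"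
  assumes adm: "\<forall>i\<in>{1..N}. admissible (a i)"
    and dist: "inj_on a {1..N}"
    and bQ: "\<forall>i\<in>{0..N}. bnd (Q i)"
    and eq: "Q 0 + (\<Sum>i=1..N. Q i * G (a i)) = 0"
  shows "\<forall>i\<in>{0..N}. Q i = 0"
proof -
  define A where "A = (\<Union>i\<in>{1..N}. set (a i))"
  define L0 where "L0 = (\<Sum>i\<in>{1..N}. length (a i))"
  have finA: "finite A" by (simp add: A_def)
  have goodA: "\<forall>x\<in>A. 0 < x \<and> \<not> 3 dvd x" using adm by (auto simp: A_def admissible_def)
  interpret hsetup A L0 using finA goodA by unfold_locales
  define I where "I = a ` {1..N}"
  define q where "q t = (if t = [] then Q 0 else if t \<in> I then Q (the_inv_into {1..N} a t) else 0)" for t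
  have nilI: "[] \<notin> I" using adm by (auto simp: I_def admissible_def)
  have IU: "I \<subseteq> U"
  proof
    fix t assume "t \<in> I"
    then obtain i where i: "i \<in> {1..N}" "t = a i" by (auto simp: I_def)
    have "length (a i) \<le> L0" unfolding L0_def using i by (intro member_le_sum) auto
    thus "t \<in> U" using i unfolding U_def by (auto simp: A_def)
  qed
  have nilU: "[] \<in> U" by (simp add: U_def)
  have qa: "q (a i) = Q i" if "i \<in> {1..N}" for i
  proof -
    have ai: "a i \<in> I" using that by (simp add: I_def)
    hence "a i \<noteq> []" using nilI by auto
    thus ?thesis using ai the_inv_into_f_f[OF dist that] by (simp add: q_def)
  qed
  have "S q = (\<Sum>t\<in>insert [] I. q t * G t)"
    unfolding S_def using IU nilU finU by (intro sum.mono_neutral_right) (auto simp: q_def)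
  also have "\<dots> = Q 0 + (\<Sum>t\<in>I. q t * G t)"
    using nilI by (simp add: I_def q_def G_Nil)
  also have "(\<Sum>t\<in>I. q t * G t) = (\<Sum>i=1..N. Q i * G (a i))"
    unfolding I_def by (subst sum.reindex[OF dist]) (auto simp: qa)
  finally have "S q = 0" using eq by simp
  moreover have "\<forall>t\<in>U. bnd (q t)"
  proof
    fix t assume "t \<in> U"
    show "bnd (q t)"
    proof (cases "t \<in> I")
      case True
      then obtain i where i: "i \<in> {1..N}" "t = a i" by (auto simp: I_def)
      thus ?thesis using qa[OF i(1)] bQ by auto
    next
      case False
      thus ?thesis using bQ by (cases "t = []") (auto simp: q_def bnd_0)
    qed
  qed
  ultimately have z: "\<forall>t\<in>U. q t = 0" using main_indep by (auto simp: rel_def)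
  show ?thesis
  proof
    fix i assume i: "i \<in> {0..N}"
    show "Q i = 0"
    proof (cases "i = 0")
      case True thus ?thesis using z nilU by (auto simp: q_def)
    next
      case False
      hence i1: "i \<in> {1..N}" using i by auto
      hence "a i \<in> U" using IU by (auto simp: I_def)
      hence "q (a i) = 0" using z by blast
      thus ?thesis using qa[OF i1] by simp
    qed
  qed
qed

lemma bnd_poly: "bnd (fps_of_poly p)"
  unfolding bnd_def by (auto intro!: exI[of _ "degree p"] coeff_eq_0)

lemma H_G: "H t = G t" by (simp add: H_def G_def)

definition phi :: "int fps \<Rightarrow> 3 fps" where "phi f = Abs_fps (\<lambda>m. of_int (f $ m))"

lemma phi_add: "phi (f + g) = phi f + phi g"
  by (rule fps_ext) (simp only: phi_def fps_add_nth fps_nth_Abs_fps of_int_add)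
lemma phi_mult: "phi (f * g) = phi f * phi g"
  by (rule fps_ext) (simp only: phi_def fps_mult_nth fps_nth_Abs_fps of_int_sum of_int_mult)
lemma phi_sum: "phi (\<Sum>i\<in>S. f i) = (\<Sum>i\<in>S. phi (f i))"
  by (rule fps_ext) (simp only: phi_def fps_sum_nth fps_nth_Abs_fps of_int_sum)
lemma phi_H: "phi (H t) = G t"
  by (rule fps_ext) (simp only: phi_def H_def G_def fps_nth_Abs_fps of_int_of_nat_eq)

definition Sf :: "nat \<Rightarrow> (nat \<Rightarrow> nat list) \<Rightarrow> (nat \<Rightarrow> int poly) \<Rightarrow> int fps" where
  "Sf N a p = fps_of_poly (p 0) + (\<Sum>i=1..N. fps_of_poly (p i) * H (a i))"

lemma mod3:
  assumes adm: "\<forall>i\<in>{1..N}. admissible (a i)" and dist: "inj_on a {1..N}"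
    and dv: "\<forall>m. (3::int) dvd Sf N a p $ m"
  shows "\<forall>i\<in>{0..N}. \<forall>k. (3::int) dvd coeff (p i) k"
proof -
  have "phi (Sf N a p) = 0"
  proof (rule fps_ext)
    fix m
    have "(of_int (Sf N a p $ m) :: 3) = 0" using dv of_int_3_eq0 by blast
    thus "phi (Sf N a p) $ m = 0 $ m" by (simp only: phi_def fps_nth_Abs_fps fps_zero_nth)
  qed
  hence "phi (fps_of_poly (p 0)) + (\<Sum>i=1..N. phi (fps_of_poly (p i)) * G (a i)) = 0"
    by (simp only: Sf_def phi_add phi_sum phi_mult phi_H)
  moreover have "bnd (phi (fps_of_poly (p i)))" for i
    unfolding bnd_def phi_def by (intro exI[of _ "degree (p i)"]) (auto simp: coeff_eq_0)
  ultimately have z: "\<forall>i\<in>{0..N}. phi (fps_of_poly (p i)) = 0"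
    using generic_indep[OF adm dist, of "\<lambda>i. phi (fps_of_poly (p i))"] by blast
  show ?thesis
  proof (intro ballI allI)
    fix i k assume "i \<in> {0..N}"
    hence "phi (fps_of_poly (p i)) = 0" using z by blast
    hence "phi (fps_of_poly (p i)) $ k = 0" by (simp only: fps_zero_nth)
    hence "(of_int (coeff (p i) k) :: 3) = 0" by (simp only: phi_def fps_nth_Abs_fps fps_of_poly_nth)
    with of_int_3_eq0 show "(3::int) dvd coeff (p i) k" by blast
  qed
qed

lemma gamma:
  assumes adm: "\<forall>i\<in>{1..N}. admissible (a i)" and dist: "inj_on a {1..N}"
  shows "1 \<le> \<gamma> \<Longrightarrow> \<forall>p. (\<forall>m. (3::int)^\<gamma> dvd Sf N a p $ m) \<longrightarrow> (\<forall>i\<in>{0..N}. \<forall>k. (3::int)^\<gamma> dvd coeff (p i) k)"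
proof (induction \<gamma>)
  case 0 thus ?case by simp
next
  case (Suc g)
  show ?case
  proof (cases "g = 0")
    case True thus ?thesis using mod3[OF adm dist] by simp
  next
    case False
    show ?thesis
    proof (intro allI impI)
      fix p assume dv: "\<forall>m. (3::int)^Suc g dvd Sf N a p $ m"
      have "\<forall>m. (3::int) dvd Sf N a p $ m"
      proof
        fix m
        have "(3::int) dvd 3^Suc g" by simp
        thus "(3::int) dvd Sf N a p $ m" using dv dvd_trans by blast
      qed
      hence d3: "\<forall>i\<in>{0..N}. \<forall>k. (3::int) dvd coeff (p i) k" using mod3[OF adm dist] by blast
      define p' where "p' i = map_poly (\<lambda>c. c div 3) (p i)" for i
      have pp: "p i = smult 3 (p' i)" if "i \<in> {0..N}" for i
        using d3 that by (intro poly_eqI) (auto simp: p'_def coeff_map_poly)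
      have "(\<Sum>i=1..N. fps_of_poly (p i) * H (a i)) = (\<Sum>i=1..N. fps_const 3 * (fps_of_poly (p' i) * H (a i)))"
        using pp by (intro sum.cong) (auto simp: fps_of_poly_smult mult.assoc)
      moreover have "fps_of_poly (p 0) = fps_const 3 * fps_of_poly (p' 0)"
        using pp[of 0] by (simp add: fps_of_poly_smult)
      ultimately have Sp: "Sf N a p = fps_const 3 * Sf N a p'"
        unfolding Sf_def by (simp add: distrib_left sum_distrib_left)
      have "\<forall>m. (3::int)^g dvd Sf N a p' $ m"
      proof
        fix m
        have "(3::int) * 3^g dvd 3 * (Sf N a p' $ m)" using dv[rule_format, of m] Sp by simp
        thus "(3::int)^g dvd Sf N a p' $ m" by (rule iffD1[OF dvd_mult_cancel_left, THEN disjE]) auto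
      qed
      hence IHp: "\<forall>i\<in>{0..N}. \<forall>k. (3::int)^g dvd coeff (p' i) k" using Suc.IH False by auto
      show "\<forall>i\<in>{0..N}. \<forall>k. (3::int)^Suc g dvd coeff (p i) k"
      proof (intro ballI allI)
        fix i k assume i: "i \<in> {0..N}"
        have "(3::int) * 3^g dvd 3 * coeff (p' i) k" using IHp i by (intro mult_dvd_mono) auto
        thus "(3::int)^Suc g dvd coeff (p i) k" using pp[OF i] by simp
      qed
    qed
  qed
qed

theorem corollary2p3:
  fixes N :: nat and a :: "nat \<Rightarrow> nat list" and p :: "nat \<Rightarrow> int poly"
  assumes adm: "\<forall>i\<in>{1..N}. admissible (a i)"
    and dist: "inj_on a {1..N}"
  shows "(\<forall>\<gamma>::nat. \<gamma> \<ge> 1 \<longrightarrow>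
            (\<forall>m. (3::int) ^ \<gamma> dvd
                 fps_nth (fps_of_poly (p 0) + (\<Sum>i=1..N. fps_of_poly (p i) * H (a i))) m)
            \<longrightarrow> (\<forall>i\<in>{0..N}. \<forall>k. (3::int) ^ \<gamma> dvd coeff (p i) k))
       \<and> (fps_of_poly (p 0) + (\<Sum>i=1..N. fps_of_poly (p i) * H (a i)) = 0
            \<longrightarrow> (\<forall>i\<in>{0..N}. p i = 0))"
proof
  show "\<forall>\<gamma>::nat. \<gamma> \<ge> 1 \<longrightarrow>
            (\<forall>m. (3::int) ^ \<gamma> dvd
                 fps_nth (fps_of_poly (p 0) + (\<Sum>i=1..N. fps_of_poly (p i) * H (a i))) m)
            \<longrightarrow> (\<forall>i\<in>{0..N}. \<forall>k. (3::int) ^ \<gamma> dvd coeff (p i) k)"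
  proof (intro allI impI)
    fix \<gamma> :: nat assume g: "1 \<le> \<gamma>"
      and d: "\<forall>m. (3::int) ^ \<gamma> dvd fps_nth (fps_of_poly (p 0) + (\<Sum>i=1..N. fps_of_poly (p i) * H (a i))) m"
    have d': "\<forall>m. (3::int) ^ \<gamma> dvd Sf N a p $ m" unfolding Sf_def using d .
    show "\<forall>i\<in>{0..N}. \<forall>k. (3::int) ^ \<gamma> dvd coeff (p i) k"
      using gamma[OF adm dist g] d' by blast
  qed
  show "fps_of_poly (p 0) + (\<Sum>i=1..N. fps_of_poly (p i) * H (a i)) = 0
            \<longrightarrow> (\<forall>i\<in>{0..N}. p i = 0)"
  proof
    assume "fps_of_poly (p 0) + (\<Sum>i=1..N. fps_of_poly (p i) * H (a i)) = 0"
    hence "fps_of_poly (p 0) + (\<Sum>i=1..N. fps_of_poly (p i) * G (a i)) = 0" by (simp only: H_G)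
    hence z: "\<forall>i\<in>{0..N}. fps_of_poly (p i) = 0"
      using generic_indep[OF adm dist, of "\<lambda>i. fps_of_poly (p i)"] bnd_poly by blast
    show "\<forall>i\<in>{0..N}. p i = 0"
    proof
      fix i assume "i \<in> {0..N}"
      hence "fps_of_poly (p i) = fps_of_poly 0" using z by simp
      thus "p i = 0" by (simp only: fps_of_poly_eq_iff)
    qed
  qed
qed



end
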